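(* Let $\mathcal{C}_1$ be an $(n,k,d)$ binary linear code. Then the code $\mathcal{C}_2 = \{(u,u) : u \in \mathcal{C}_1\}$ is a $(2n,k,2d)$ code with $$\rho(\mathcal{C}_2) \le \rho(\mathcal{C}_1) + n.$$
   Context: An $(n,k,d)$ code is a linear code of length $n$, dimension $k$ and minimum Hamming distance $d$. A parity-check matrix for a linear code $\mathcal{C}$ is any matrix (possibly with linearly dependent rows) whose rows span $\mathcal{C}^\perp$. For a parity-check matrix $H$, the stopping distance $s(H)$ is the largest integer such that for every set of $s(H)-1$ or fewer columns of $H$, the projection of $H$ onto those columns contains at least one row of Hamming weight exactly one. The stopping redundancy $\rho(\mathcal{C})$ is the smallest number of rows of a parity-check matrix $H$ for $\mathcal{C}$ with $s(H) = d(\mathcal{C})$, the minimum distance of $\mathcal{C}$. *)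

theory Defs
  imports Main "HOL-Library.Z2"
begin

type_synonym bvec = "nat \<Rightarrow> bit"

definition bvecs :: "nat \<Rightarrow> bvec set" where
  "bvecs n = {x. \<forall>i. n \<le> i \<longrightarrow> x i = 0}"

definition zvec :: bvec where
  "zvec = (\<lambda>i. 0)"

definition vadd :: "bvec \<Rightarrow> bvec \<Rightarrow> bvec" where
  "vadd x y = (\<lambda>i. x i + y i)"

definition vscale :: "bit \<Rightarrow> bvec \<Rightarrow> bvec" where
  "vscale c x = (\<lambda>i. c * x i)"

definition weight :: "bvec \<Rightarrow> nat" where
  "weight x = card {i. x i \<noteq> 0}"

definition inner :: "nat \<Rightarrow> bvec \<Rightarrow> bvec \<Rightarrow> bit" where
  "inner n x y = (\<Sum>i<n. x i * y i)"

definition linear_code :: "nat \<Rightarrow> bvec set \<Rightarrow> bool" where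
  "linear_code n C \<longleftrightarrow> C \<subseteq> bvecs n \<and> zvec \<in> C \<and>
     (\<forall>x\<in>C. \<forall>y\<in>C. \<forall>a b. vadd (vscale a x) (vscale b y) \<in> C)"

definition lincomb :: "bvec set \<Rightarrow> (bvec \<Rightarrow> bit) \<Rightarrow> bvec" where
  "lincomb B c = (\<lambda>j. \<Sum>b\<in>B. c b * b j)"

definition lin_indep :: "bvec set \<Rightarrow> bool" where
  "lin_indep B \<longleftrightarrow> (\<forall>c. lincomb B c = zvec \<longrightarrow> (\<forall>b\<in>B. c b = 0))"

definition has_dim :: "bvec set \<Rightarrow> nat \<Rightarrow> bool" where
  "has_dim C k \<longleftrightarrow> (\<exists>B. finite B \<and> B \<subseteq> C \<and> card B = k \<and> lin_indep B \<and>
     (\<forall>x\<in>C. \<exists>c. x = lincomb B c))"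

text \<open>Minimum Hamming distance of a linear code = minimum nonzero weight.\<close>
definition min_dist :: "bvec set \<Rightarrow> nat" where
  "min_dist C = (LEAST w. \<exists>c\<in>C. c \<noteq> zvec \<and> weight c = w)"

text \<open>(n,k,d) binary linear code (d is a genuine minimum distance, so C contains
  a nonzero codeword).\<close>
definition is_code :: "nat \<Rightarrow> nat \<Rightarrow> nat \<Rightarrow> bvec set \<Rightarrow> bool" where
  "is_code n k d C \<longleftrightarrow> linear_code n C \<and> has_dim C k \<and>
     (\<exists>c\<in>C. c \<noteq> zvec) \<and> min_dist C = d"

definition dual_code :: "nat \<Rightarrow> bvec set \<Rightarrow> bvec set" where
  "dual_code n C = {y \<in> bvecs n. \<forall>x\<in>C. inner n x y = 0}"

definition row_span :: "bvec list \<Rightarrow> bvec set" where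
  "row_span H = {(\<lambda>j. \<Sum>i<length H. c i * (H ! i) j) | c. True}"

text \<open>Parity-check matrix (rows possibly dependent) for C: rows are length-n
  vectors spanning the dual code.\<close>
definition parity_check :: "nat \<Rightarrow> bvec set \<Rightarrow> bvec list \<Rightarrow> bool" where
  "parity_check n C H \<longleftrightarrow> set H \<subseteq> bvecs n \<and> row_span H = dual_code n C"

definition has_weight_one_row :: "bvec list \<Rightarrow> nat set \<Rightarrow> bool" where
  "has_weight_one_row H S \<longleftrightarrow> (\<exists>h\<in>set H. card {j\<in>S. h j \<noteq> 0} = 1)"

definition stop_dist :: "nat \<Rightarrow> bvec list \<Rightarrow> nat" where
  "stop_dist n H = (GREATEST s. \<forall>S. S \<subseteq> {..<n} \<and> S \<noteq> {} \<and> card S < s \<longrightarrow>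
       has_weight_one_row H S)"

definition stop_red :: "nat \<Rightarrow> bvec set \<Rightarrow> nat" where
  "stop_red n C = (LEAST m. \<exists>H. length H = m \<and> parity_check n C H \<and>
       stop_dist n H = min_dist C)"

definition uu_code :: "nat \<Rightarrow> bvec set \<Rightarrow> bvec set" where
  "uu_code n C = {(\<lambda>i. if i < n then u i else if i < 2*n then u (i - n) else 0) | u. u \<in> C}"

end

theory Submission imports Defs begin
declare add_bit_eq_xor[simp del] mult_bit_eq_and[simp del]

lemma bit_add_self[simp]: "(x::bit) + x = 0"
  by (cases x) simp_all

lemma bit_cases_all: "(x::bit) = 0 \<or> x = 1" by (cases x) simp_all

lemma bit_move: "(x::bit) + z = y \<Longrightarrow> x = y + z"
  by (cases x; cases y; cases z) simp_all

lemma sum_split_nat: "(\<Sum>i<a+(b::nat). f i) = (\<Sum>i<a. f i) + (\<Sum>i<b. f (a+i))"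
  by (induction b) (simp_all add: add.assoc)

lemma fredholm:
  fixes B :: "'b set" and a :: "nat \<Rightarrow> 'b \<Rightarrow> bit" and v :: "'b \<Rightarrow> bit"
  assumes "finite B" "finite T"
  and "\<forall>z. (\<forall>l\<in>T. (\<Sum>b\<in>B. z b * a l b) = 0) \<longrightarrow> (\<Sum>b\<in>B. z b * v b) = 0"
  shows "\<exists>y. \<forall>b\<in>B. v b = (\<Sum>l\<in>T. y l * a l b)"
  using assms(2,3)
proof (induction T arbitrary: a v rule: finite_induct)
  case empty
  have "v b0 = 0" if "b0 \<in> B" for b0
  proof -
    have "(\<Sum>b\<in>B. (if b = b0 then 1 else 0) * v b) = 0" using empty by auto
    moreover have "(\<Sum>b\<in>B. (if b = b0 then 1 else 0) * v b) = (\<Sum>b\<in>B. (if b = b0 then v b else 0))"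
      by (rule sum.cong) auto
    ultimately show ?thesis using that assms(1) by (simp add: sum.delta')
  qed
  then show ?case by auto
next
  case (insert t T)
  show ?case
  proof (cases "\<forall>b\<in>B. a t b = 0")
    case True
    have "\<forall>z. (\<forall>l\<in>T. (\<Sum>b\<in>B. z b * a l b) = 0) \<longrightarrow> (\<Sum>b\<in>B. z b * v b) = 0"
      using insert.prems True by auto
    then obtain y where y: "\<forall>b\<in>B. v b = (\<Sum>l\<in>T. y l * a l b)" using insert.IH[of a v] by blast
    show ?thesis
    proof (intro exI ballI)
      fix b assume b: "b \<in> B"
      have "(\<Sum>l\<in>insert t T. (y(t:=0)) l * a l b) = (\<Sum>l\<in>T. (y(t:=0)) l * a l b)"
        using insert.hyps by simp
      also have "\<dots> = (\<Sum>l\<in>T. y l * a l b)"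
        using insert.hyps by (intro sum.cong) auto
      finally show "v b = (\<Sum>l\<in>insert t T. (y(t:=0)) l * a l b)" using y b by simp
    qed
  next
    case False
    then obtain p where p: "p \<in> B" "a t p = 1" by auto
    define \<pi> where "\<pi> x = (\<lambda>b. x b + x p * a t b)" for x :: "'b \<Rightarrow> bit"
    have key: "(\<Sum>b\<in>B. (z b + (if b = p then (\<Sum>b\<in>B. z b * a t b) else 0)) * x b)
        = (\<Sum>b\<in>B. z b * \<pi> x b)" for z x
    proof -
      have "(\<Sum>b\<in>B. (z b + (if b = p then (\<Sum>b\<in>B. z b * a t b) else 0)) * x b)
         = (\<Sum>b\<in>B. z b * x b) + (\<Sum>b\<in>B. (if b = p then (\<Sum>b\<in>B. z b * a t b) * x b else 0))"
        by (subst sum.distrib[symmetric], rule sum.cong) (auto simp: distrib_right)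
      also have "\<dots> = (\<Sum>b\<in>B. z b * x b) + (\<Sum>b\<in>B. z b * a t b) * x p"
        using p assms(1) by (simp add: sum.delta')
      also have "\<dots> = (\<Sum>b\<in>B. z b * \<pi> x b)"
      proof -
        have "(\<Sum>b\<in>B. z b * a t b) * x p = x p * (\<Sum>b\<in>B. z b * a t b)"
          by (rule mult.commute)
        also have "\<dots> = (\<Sum>b\<in>B. x p * (z b * a t b))" by (rule sum_distrib_left)
        also have "\<dots> = (\<Sum>b\<in>B. z b * (x p * a t b))"
          by (rule sum.cong) (simp_all add: mult.left_commute)
        finally have eq: "(\<Sum>b\<in>B. z b * a t b) * x p = (\<Sum>b\<in>B. z b * (x p * a t b))" .
        have "(\<Sum>b\<in>B. z b * \<pi> x b) = (\<Sum>b\<in>B. z b * x b + z b * (x p * a t b))"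
          unfolding \<pi>_def by (rule sum.cong) (simp_all add: distrib_left)
        also have "\<dots> = (\<Sum>b\<in>B. z b * x b) + (\<Sum>b\<in>B. z b * (x p * a t b))"
          by (rule sum.distrib)
        finally show ?thesis unfolding eq by (rule sym)
      qed
      finally show ?thesis .
    qed
    have "\<forall>z. (\<forall>l\<in>T. (\<Sum>b\<in>B. z b * \<pi> (a l) b) = 0) \<longrightarrow> (\<Sum>b\<in>B. z b * \<pi> v b) = 0"
    proof (intro allI impI)
      fix z assume hz: "\<forall>l\<in>T. (\<Sum>b\<in>B. z b * \<pi> (a l) b) = 0"
      define z' where "z' b = z b + (if b = p then (\<Sum>b\<in>B. z b * a t b) else 0)" for b
      have "\<forall>l\<in>insert t T. (\<Sum>b\<in>B. z' b * a l b) = 0"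
      proof
        fix l assume "l \<in> insert t T"
        then consider "l = t" | "l \<in> T" by auto
        then show "(\<Sum>b\<in>B. z' b * a l b) = 0"
        proof cases
          case 1
          have "(\<Sum>b\<in>B. z' b * a l b) = (\<Sum>b\<in>B. z b * \<pi> (a t) b)"
            unfolding z'_def 1 by (rule key)
          also have "\<dots> = 0" by (simp add: \<pi>_def p)
          finally show ?thesis .
        next
          case 2
          have "(\<Sum>b\<in>B. z' b * a l b) = (\<Sum>b\<in>B. z b * \<pi> (a l) b)"
            unfolding z'_def by (rule key)
          then show ?thesis using hz 2 by simp
        qed
      qed
      then have "(\<Sum>b\<in>B. z' b * v b) = 0" using insert.prems[rule_format, of z'] by blast
      then show "(\<Sum>b\<in>B. z b * \<pi> v b) = 0" unfolding z'_def key .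
    qed
    then obtain y where y: "\<forall>b\<in>B. \<pi> v b = (\<Sum>l\<in>T. y l * \<pi> (a l) b)"
      using insert.IH[of "\<lambda>l. \<pi> (a l)" "\<pi> v"] by blast
    define q where "q = v p + (\<Sum>l\<in>T. y l * a l p)"
    show ?thesis
    proof (intro exI ballI)
      fix b assume b: "b \<in> B"
      have "(\<Sum>l\<in>insert t T. (y(t:=q)) l * a l b) = q * a t b + (\<Sum>l\<in>T. (y(t:=q)) l * a l b)"
        using insert.hyps by simp
      also have "(\<Sum>l\<in>T. (y(t:=q)) l * a l b) = (\<Sum>l\<in>T. y l * a l b)"
        using insert.hyps by (intro sum.cong) auto
      finally have e1: "(\<Sum>l\<in>insert t T. (y(t:=q)) l * a l b) = q * a t b + (\<Sum>l\<in>T. y l * a l b)" .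
      have "v b + v p * a t b = (\<Sum>l\<in>T. y l * (a l b + a l p * a t b))"
        using y b by (simp add: \<pi>_def)
      also have "\<dots> = (\<Sum>l\<in>T. y l * a l b + y l * a l p * a t b)"
        by (rule sum.cong) (simp_all add: distrib_left mult.assoc)
      also have "\<dots> = (\<Sum>l\<in>T. y l * a l b) + (\<Sum>l\<in>T. y l * a l p * a t b)"
        by (rule sum.distrib)
      also have "(\<Sum>l\<in>T. y l * a l p * a t b) = (\<Sum>l\<in>T. y l * a l p) * a t b"
        by (rule sum_distrib_right[symmetric])
      finally have "v b = (\<Sum>l\<in>T. y l * a l b) + (\<Sum>l\<in>T. y l * a l p) * a t b + v p * a t b"
        by (rule bit_move)
      then have "v b = q * a t b + (\<Sum>l\<in>T. y l * a l b)"
        unfolding q_def by algebra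
      then show "v b = (\<Sum>l\<in>insert t T. (y(t:=q)) l * a l b)"
        using e1 by simp
    qed
  qed
qed


lemma zvec_app[simp]: "zvec i = 0" by (simp add: zvec_def)

lemma lc_sum:
  assumes "linear_code n D" "finite I" "\<forall>i\<in>I. f i \<in> D"
  shows "(\<lambda>j. \<Sum>i\<in>I. c i * f i j) \<in> D"
  using assms(2,3)
proof (induction I rule: finite_induct)
  case empty
  have "(\<lambda>j. \<Sum>i\<in>{}. c i * f i j) = zvec" by (simp add: zvec_def)
  then show ?case using assms(1) by (simp add: linear_code_def)
next
  case (insert i I)
  have "(\<lambda>j. \<Sum>i\<in>insert i I. c i * f i j) = vadd (vscale (c i) (f i)) (vscale 1 (\<lambda>j. \<Sum>i\<in>I. c i * f i j))"
    using insert.hyps by (simp add: vadd_def vscale_def)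
  then show ?case using assms(1) insert by (simp add: linear_code_def)
qed

lemma inner_comm: "inner n x y = inner n y x"
  by (simp add: inner_def mult.commute)

lemma dual_lin: "linear_code n (dual_code n C)"
proof -
  have "zvec \<in> dual_code n C" by (simp add: dual_code_def bvecs_def inner_def)
  moreover have "vadd (vscale a y) (vscale b z) \<in> dual_code n C"
    if "y \<in> dual_code n C" "z \<in> dual_code n C" for a b y z
  proof -
    have "inner n x (vadd (vscale a y) (vscale b z)) = a * inner n x y + b * inner n x z" for x
      by (simp add: inner_def vadd_def vscale_def sum.distrib sum_distrib_left distrib_left mult_ac)
    then show ?thesis using that by (auto simp: dual_code_def bvecs_def vadd_def vscale_def)
  qed
  ultimately show ?thesis by (auto simp: linear_code_def dual_code_def)
qed

lemma set_row_span: "set H \<subseteq> row_span H"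
proof
  fix h assume "h \<in> set H"
  then obtain i where i: "i < length H" "H ! i = h" by (auto simp: in_set_conv_nth)
  have "(\<lambda>j. \<Sum>i'<length H. (if i' = i then 1 else 0) * (H ! i') j) = h"
  proof
    fix j
    have "(\<Sum>i'<length H. (if i' = i then 1 else 0) * (H ! i') j) = (\<Sum>i'<length H. (if i' = i then (H ! i') j else 0))"
      by (rule sum.cong) auto
    then show "(\<Sum>i'<length H. (if i' = i then 1 else 0) * (H ! i') j) = h j" using i by simp
  qed
  then have ex: "\<exists>c. h = (\<lambda>j. \<Sum>i'<length H. c i' * (H ! i') j)"
    by (intro exI[of _ "\<lambda>i'. if i' = i then 1 else 0"]) (rule sym)
  then show "h \<in> row_span H" unfolding row_span_def by blast
qed

lemma row_span_sub: "linear_code n D \<Longrightarrow> set H \<subseteq> D \<Longrightarrow> row_span H \<subseteq> D"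
proof -
  assume a: "linear_code n D" "set H \<subseteq> D"
  then have "\<forall>i\<in>{..<length H}. H ! i \<in> D" using nth_mem by auto
  then show ?thesis unfolding row_span_def using lc_sum[OF a(1), of "{..<length H}" "\<lambda>i. H ! i"] by auto
qed

lemma bvecs_lt: "x \<in> bvecs n \<Longrightarrow> x i \<noteq> 0 \<Longrightarrow> i < n"
  by (cases "i < n") (auto simp: bvecs_def)

lemma finite_bvecs: "finite (bvecs n)"
proof -
  have "bvecs n \<subseteq> (\<lambda>S i. if i \<in> S then 1 else 0) ` Pow {..<n}"
  proof
    fix x assume x: "x \<in> bvecs n"
    have "x = (\<lambda>i. if i \<in> {i. i < n \<and> x i = 1} then 1 else 0)"
    proof
      fix i show "x i = (if i \<in> {i. i < n \<and> x i = 1} then 1 else 0)"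
        using x bvecs_lt[OF x, of i] by (cases "x i"; auto)
    qed
    then show "x \<in> (\<lambda>S i. if i \<in> S then 1 else 0) ` Pow {..<n}" by blast
  qed
  then show ?thesis by (rule finite_subset) simp
qed

lemma no_w1:
  assumes "parity_check n C H" "c \<in> C" "C \<subseteq> bvecs n" "h \<in> set H"
  shows "card {j \<in> {j. c j \<noteq> 0}. h j \<noteq> 0} \<noteq> 1"
proof
  assume "card {j \<in> {j. c j \<noteq> 0}. h j \<noteq> 0} = 1"
  then obtain j0 where j0: "{j \<in> {j. c j \<noteq> 0}. h j \<noteq> 0} = {j0}" by (auto simp: card_Suc_eq)
  have hd: "h \<in> dual_code n C" using assms set_row_span unfolding parity_check_def by blast
  have "c j0 \<noteq> 0" "h j0 \<noteq> 0" using j0 by auto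
  then have cj: "c j0 = 1" "h j0 = 1" by auto
  have "j0 < n" using \<open>c j0 \<noteq> 0\<close> assms(2,3) bvecs_lt by blast
  have "inner n c h = (\<Sum>i\<in>{j0}. c i * h i)"
    unfolding inner_def
  proof (rule sum.mono_neutral_cong_right)
    show "\<forall>i\<in>{..<n} - {j0}. c i * h i = 0"
    proof
      fix i assume i: "i \<in> {..<n} - {j0}"
      then have "i \<notin> {j \<in> {j. c j \<noteq> 0}. h j \<noteq> 0}" using j0 by auto
      then show "c i * h i = 0" by auto
    qed
  qed (use \<open>j0 < n\<close> in auto)
  also have "\<dots> = 1" using cj by simp
  finally show False using hd assms(2) by (simp add: dual_code_def)
qed

definition wop :: "nat \<Rightarrow> bvec list \<Rightarrow> nat \<Rightarrow> bool" where
  "wop n H s = (\<forall>S. S \<subseteq> {..<n} \<and> S \<noteq> {} \<and> card S < s \<longrightarrow> has_weight_one_row H S)"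

lemma stop_dist_wop: "stop_dist n H = Greatest (wop n H)"
  unfolding stop_dist_def wop_def by simp

lemma wop_mono: "wop n H s \<Longrightarrow> s' \<le> s \<Longrightarrow> wop n H s'"
  unfolding wop_def by auto

lemma nonzero_ex: "c \<noteq> zvec \<Longrightarrow> \<exists>j. c j \<noteq> 0"
  by (auto simp: zvec_def fun_eq_iff)

lemma wop_fail:
  assumes "parity_check n C H" "C \<subseteq> bvecs n" "c \<in> C" "c \<noteq> zvec"
  shows "\<not> wop n H (Suc (weight c))"
proof
  assume w: "wop n H (Suc (weight c))"
  let ?S = "{j. c j \<noteq> 0}"
  have "?S \<subseteq> {..<n}" using assms(2,3) bvecs_lt by blast
  moreover have "?S \<noteq> {}" using nonzero_ex[OF assms(4)] by auto
  moreover have "card ?S < Suc (weight c)" by (simp add: weight_def)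
  ultimately have "has_weight_one_row H ?S" using w unfolding wop_def by blast
  then show False using no_w1[OF assms(1,3,2)] unfolding has_weight_one_row_def by blast
qed

lemma sd_eq:
  assumes "parity_check n C H" "C \<subseteq> bvecs n" "c \<in> C" "c \<noteq> zvec" "weight c = w" "wop n H w"
  shows "stop_dist n H = w"
  unfolding stop_dist_wop
proof (rule Greatest_equality)
  show "wop n H w" by fact
  fix y assume "wop n H y"
  show "y \<le> w"
  proof (rule ccontr)
    assume "\<not> y \<le> w"
    then have "wop n H (Suc w)" using wop_mono[OF \<open>wop n H y\<close>] by simp
    then show False using wop_fail[OF assms(1-4)] assms(5) by simp
  qed
qed

lemma sd_wop:
  assumes "parity_check n C H" "C \<subseteq> bvecs n" "c \<in> C" "c \<noteq> zvec"
  shows "wop n H (stop_dist n H)"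
  unfolding stop_dist_wop
proof (rule GreatestI_nat[of _ 0 "weight c"])
  show "wop n H 0" by (simp add: wop_def)
  fix y assume "wop n H y"
  show "y \<le> weight c"
  proof (rule ccontr)
    assume "\<not> y \<le> weight c"
    then have "wop n H (Suc (weight c))" using wop_mono[OF \<open>wop n H y\<close>] by simp
    then show False using wop_fail[OF assms] by simp
  qed
qed

lemma code_min_ex: assumes "is_code n k d C" shows "\<exists>c\<in>C. c \<noteq> zvec \<and> weight c = d"
proof -
  let ?P = "\<lambda>w. \<exists>c\<in>C. c \<noteq> zvec \<and> weight c = w"
  obtain c where "c \<in> C" "c \<noteq> zvec" using assms by (auto simp: is_code_def)
  then have "?P (weight c)" by blast
  then have "?P (Least ?P)" by (rule LeastI)
  then show ?thesis using assms by (simp add: is_code_def min_dist_def)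
qed

lemma code_min_le: assumes "is_code n k d C" "c \<in> C" "c \<noteq> zvec" shows "d \<le> weight c"
proof -
  let ?P = "\<lambda>w. \<exists>c\<in>C. c \<noteq> zvec \<and> weight c = w"
  have "?P (weight c)" using assms by blast
  then have "Least ?P \<le> weight c" by (rule Least_le)
  then show ?thesis using assms by (simp add: is_code_def min_dist_def)
qed


lemma code_sub: "is_code n k d C \<Longrightarrow> C \<subseteq> bvecs n"
  by (simp add: is_code_def linear_code_def)

lemma key_dual:
  assumes code: "is_code n k d C" and S: "S \<subseteq> {..<n}" "card S < d" "j \<in> S"
  shows "\<exists>y \<in> dual_code n C. \<forall>l\<in>S. y l = (if l = j then 1 else 0)"
proof -
  have lin: "linear_code n C" and Cb: "C \<subseteq> bvecs n" using code by (auto simp: is_code_def linear_code_def)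
  obtain B where B: "finite B" "B \<subseteq> C" "\<forall>x\<in>C. \<exists>c. x = lincomb B c"
    using code unfolding is_code_def has_dim_def by blast
  define T where "T = {..<n} - S"
  have fS: "finite S" using S(1) finite_subset by blast
  have "\<exists>y. \<forall>b\<in>B. b j = (\<Sum>l\<in>T. y l * b l)"
  proof (rule fredholm[of B T "\<lambda>l b. b l" "\<lambda>b. b j"])
    show "finite B" by fact
    show "finite T" by (simp add: T_def)
    show "\<forall>z. (\<forall>l\<in>T. (\<Sum>b\<in>B. z b * b l) = 0) \<longrightarrow> (\<Sum>b\<in>B. z b * b j) = 0"
    proof (intro allI impI)
      fix z assume hz: "\<forall>l\<in>T. (\<Sum>b\<in>B. z b * b l) = 0"
      define x where "x = (\<lambda>l. \<Sum>b\<in>B. z b * b l)"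
      have xC: "x \<in> C" unfolding x_def using lc_sum[OF lin B(1), of "\<lambda>b. b" z] B(2) by auto
      have supp: "{l. x l \<noteq> 0} \<subseteq> S"
      proof
        fix l assume "l \<in> {l. x l \<noteq> 0}"
        then have "x l \<noteq> 0" by simp
        then have "l < n" using bvecs_lt xC Cb by blast
        show "l \<in> S"
        proof (rule ccontr)
          assume "l \<notin> S"
          then have "l \<in> T" using \<open>l < n\<close> by (simp add: T_def)
          then have "x l = 0" using hz by (simp add: x_def)
          then show False using \<open>x l \<noteq> 0\<close> by simp
        qed
      qed
      have "x = zvec"
      proof (rule ccontr)
        assume "x \<noteq> zvec"
        then have "d \<le> weight x" using code_min_le[OF code xC] by simp
        moreover have "weight x \<le> card S" unfolding weight_def using supp fS by (rule card_mono[rotated])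
        ultimately show False using S(2) by simp
      qed
      then show "(\<Sum>b\<in>B. z b * b j) = 0" unfolding x_def zvec_def by (metis)
    qed
  qed
  then obtain y0 where y0: "\<forall>b\<in>B. b j = (\<Sum>l\<in>T. y0 l * b l)" by blast
  define y where "y l = (if l \<in> S then (if l = j then 1 else 0) else if l < n then y0 l else 0)" for l
  have yb: "y \<in> bvecs n" using S(1) by (auto simp: bvecs_def y_def)
  have ib: "inner n b y = 0" if "b \<in> B" for b
  proof -
    have "inner n b y = (\<Sum>l\<in>{..<n} - S. b l * y l) + (\<Sum>l\<in>S. b l * y l)"
      unfolding inner_def using S(1) by (rule sum.subset_diff) simp
    also have "(\<Sum>l\<in>S. b l * y l) = (\<Sum>l\<in>S. if l = j then b l else 0)"
      by (rule sum.cong) (auto simp: y_def)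
    also have "\<dots> = b j" using fS S(3) by (simp add: sum.delta')
    also have "(\<Sum>l\<in>{..<n} - S. b l * y l) = (\<Sum>l\<in>T. y0 l * b l)"
      unfolding T_def by (rule sum.cong) (auto simp: y_def mult.commute)
    also have "\<dots> = b j" using y0 that by simp
    finally show ?thesis by simp
  qed
  have "y \<in> dual_code n C"
  proof -
    have "\<forall>b\<in>B. b \<in> dual_code n {y}" using ib B(2) Cb by (auto simp: dual_code_def inner_comm)
    then have "lincomb B c \<in> dual_code n {y}" for c
      unfolding lincomb_def using lc_sum[OF dual_lin B(1), of "\<lambda>b. b" n "{y}" c] by auto
    then have "\<forall>x\<in>C. inner n x y = 0" using B(3) by (auto simp: dual_code_def inner_comm)
    then show ?thesis using yb by (simp add: dual_code_def)
  qed
  moreover have "\<forall>l\<in>S. y l = (if l = j then 1 else 0)" by (simp add: y_def)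
  ultimately show ?thesis by blast
qed

lemma exists_H:
  assumes code: "is_code n k d C"
  shows "\<exists>H. parity_check n C H \<and> stop_dist n H = d"
proof -
  have Cb: "C \<subseteq> bvecs n" using code by (rule code_sub)
  have "finite (dual_code n C)" using finite_bvecs by (rule finite_subset[rotated]) (auto simp: dual_code_def)
  then obtain H where H: "set H = dual_code n C" using finite_list by blast
  have pc: "parity_check n C H"
    unfolding parity_check_def
  proof
    show "set H \<subseteq> bvecs n" using H by (auto simp: dual_code_def)
    show "row_span H = dual_code n C"
      using row_span_sub[OF dual_lin, of H n C] set_row_span[of H] H by auto
  qed
  have "wop n H d"
    unfolding wop_def
  proof (intro allI impI)
    fix S assume S: "S \<subseteq> {..<n} \<and> S \<noteq> {} \<and> card S < d"
    then obtain j where j: "j \<in> S" by blast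
    obtain y where y: "y \<in> dual_code n C" "\<forall>l\<in>S. y l = (if l = j then 1 else 0)"
      using key_dual[OF code _ _ j] S by blast
    have "{l \<in> S. y l \<noteq> 0} = {j}" using y(2) j by (auto split: if_splits)
    then show "has_weight_one_row H S" unfolding has_weight_one_row_def 
      using y(1) H by (intro bexI[of _ y]) simp_all
  qed
  obtain c where c: "c \<in> C" "c \<noteq> zvec" "weight c = d" using code_min_ex[OF code] by blast
  have "stop_dist n H = d" by (rule sd_eq[OF pc Cb c \<open>wop n H d\<close>])
  then show ?thesis using pc by blast
qed


definition uu :: "nat \<Rightarrow> bvec \<Rightarrow> bvec" where
  "uu n u = (\<lambda>i. if i < n then u i else if i < 2*n then u (i - n) else 0)"

lemma uu_code_img: "uu_code n C = uu n ` C"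
  by (auto simp: uu_code_def uu_def)

lemma uu_lo[simp]: "i < n \<Longrightarrow> uu n u i = u i" by (simp add: uu_def)
lemma uu_hi[simp]: "i < n \<Longrightarrow> uu n u (n + i) = u i" by (simp add: uu_def)

lemma uu_bvecs: "uu n u \<in> bvecs (2*n)" by (simp add: uu_def bvecs_def)

lemma uu_zvec: "uu n zvec = zvec" by (simp add: uu_def zvec_def fun_eq_iff)

lemma uu_lin: "uu n (vadd (vscale a x) (vscale b y)) = vadd (vscale a (uu n x)) (vscale b (uu n y))"
  by (simp add: uu_def vadd_def vscale_def fun_eq_iff)

lemma uu_inj: "inj_on (uu n) (bvecs n)"
proof
  fix x y assume x: "x \<in> bvecs n" and y: "y \<in> bvecs n" and e: "uu n x = uu n y"
  show "x = y"
  proof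
    fix i show "x i = y i"
    proof (cases "i < n")
      case True then show ?thesis using fun_cong[OF e, of i] by simp
    next
      case False then show ?thesis using x y by (simp add: bvecs_def)
    qed
  qed
qed

lemma uu_sum: "uu n (\<lambda>j. \<Sum>b\<in>B. g b * b j) = (\<lambda>j. \<Sum>b\<in>B. g b * uu n b j)"
  by (auto simp: uu_def fun_eq_iff)

lemma card_double:
  assumes "A \<subseteq> {..<(n::nat)}"
  shows "card (A \<union> (\<lambda>i. n + i) ` A) = 2 * card A"
proof -
  have f: "finite A" by (rule finite_subset[OF assms finite_lessThan])
  have "x \<notin> (\<lambda>i. n + i) ` A" if "x \<in> A" for x
    using that assms by fastforce
  then have d: "A \<inter> (\<lambda>i. n + i) ` A = {}" by blast
  have "card (A \<union> (\<lambda>i. n + i) ` A) = card A + card ((\<lambda>i. n + i) ` A)"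
    using f by (intro card_Un_disjoint) (simp_all add: d)
  also have "card ((\<lambda>i. n + i) ` A) = card A" by (rule card_image) simp
  finally show ?thesis by simp
qed

lemma uu_weight:
  assumes "u \<in> bvecs n" shows "weight (uu n u) = 2 * weight u"
proof -
  let ?A = "{i. u i \<noteq> 0}"
  have A: "?A \<subseteq> {..<n}" using assms bvecs_lt by blast
  have "{i. uu n u i \<noteq> 0} = ?A \<union> (\<lambda>i. n + i) ` ?A"
  proof (rule set_eqI)
    fix i
    show "i \<in> {i. uu n u i \<noteq> 0} \<longleftrightarrow> i \<in> ?A \<union> (\<lambda>i. n + i) ` ?A"
    proof (cases "i < n")
      case True
      then show ?thesis using A by (auto simp: uu_def)
    next
      case False
      then have "i \<in> (\<lambda>i. n + i) ` ?A \<longleftrightarrow> i < 2*n \<and> u (i - n) \<noteq> 0"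
        using A by (auto simp: image_iff intro!: bexI[of _ "i - n"])
      then show ?thesis using False A by (auto simp: uu_def)
    qed
  qed
  then show ?thesis unfolding weight_def using card_double[OF A] by simp
qed

lemma uu_nonzero: "u \<noteq> zvec \<Longrightarrow> u \<in> bvecs n \<Longrightarrow> uu n u \<noteq> zvec"
  by (metis bvecs_lt nonzero_ex uu_lo zvec_app)

lemma uu_is_code:
  assumes code: "is_code n k d C"
  shows "is_code (2*n) k (2*d) (uu_code n C)"
proof -
  have lin: "linear_code n C" and Cb: "C \<subseteq> bvecs n" using code by (auto simp: is_code_def linear_code_def)
  obtain B where B: "finite B" "B \<subseteq> C" "card B = k" "lin_indep B" "\<forall>x\<in>C. \<exists>c. x = lincomb B c"
    using code unfolding is_code_def has_dim_def by blast
  have inj: "inj_on (uu n) C" using uu_inj Cb inj_on_subset by blast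
  have lc_in: "lincomb B c \<in> C" for c
    unfolding lincomb_def using lc_sum[OF lin B(1), of "\<lambda>b. b" c] B(2) by auto
  have lcuu: "lincomb (uu n ` B) c = uu n (lincomb B (\<lambda>b. c (uu n b)))" for c
  proof -
    have "inj_on (uu n) B" using inj B(2) inj_on_subset by blast
    then have "lincomb (uu n ` B) c = (\<lambda>j. \<Sum>b\<in>B. c (uu n b) * uu n b j)"
      by (simp add: lincomb_def sum.reindex)
    then show ?thesis by (simp add: lincomb_def uu_sum)
  qed
  have L: "linear_code (2*n) (uu_code n C)"
    unfolding linear_code_def uu_code_img
  proof (intro conjI ballI allI)
    show "uu n ` C \<subseteq> bvecs (2 * n)" using uu_bvecs by blast
    show "zvec \<in> uu n ` C" using lin uu_zvec by (metis image_eqI linear_code_def)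
    fix x y a b assume "x \<in> uu n ` C" "y \<in> uu n ` C"
    then obtain u v where "u \<in> C" "v \<in> C" "x = uu n u" "y = uu n v" by blast
    then show "vadd (vscale a x) (vscale b y) \<in> uu n ` C"
      using lin uu_lin by (metis image_eqI linear_code_def)
  qed
  have D: "has_dim (uu_code n C) k"
    unfolding has_dim_def uu_code_img
  proof (intro exI[of _ "uu n ` B"] conjI)
    show "finite (uu n ` B)" using B(1) by simp
    show "uu n ` B \<subseteq> uu n ` C" using B(2) by blast
    show "card (uu n ` B) = k" using B(3) card_image[OF inj_on_subset[OF inj B(2)]] by simp
    show "lin_indep (uu n ` B)"
      unfolding lin_indep_def
    proof (intro allI impI ballI)
      fix c w assume z: "lincomb (uu n ` B) c = zvec" and w: "w \<in> uu n ` B"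
      then have "uu n (lincomb B (\<lambda>b. c (uu n b))) = uu n zvec" using lcuu uu_zvec by simp
      then have "lincomb B (\<lambda>b. c (uu n b)) = zvec"
        using inj lc_in lin by (meson inj_onD linear_code_def)
      then have "\<forall>b\<in>B. c (uu n b) = 0" using B(4) unfolding lin_indep_def by blast
      then show "c w = 0" using w by blast
    qed
    show "\<forall>x\<in>uu n ` C. \<exists>c. x = lincomb (uu n ` B) c"
    proof
      fix x assume "x \<in> uu n ` C"
      then obtain u where u: "u \<in> C" "x = uu n u" by blast
      then obtain c where c: "u = lincomb B c" using B(5) by blast
      define c' where "c' = (\<lambda>w. c (inv_into B (uu n) w))"
      have "inj_on (uu n) B" using inj B(2) inj_on_subset by blast
      then have "lincomb B (\<lambda>b. c' (uu n b)) = lincomb B c"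
        unfolding lincomb_def c'_def by (auto intro!: sum.cong simp: inv_into_f_f)
      then have "x = lincomb (uu n ` B) c'" using lcuu u c by simp
      then show "\<exists>c. x = lincomb (uu n ` B) c" by blast
    qed
  qed
  obtain c0 where c0: "c0 \<in> C" "c0 \<noteq> zvec" "weight c0 = d" using code_min_ex[OF code] by blast
  have nz: "\<exists>c\<in>uu_code n C. c \<noteq> zvec"
    using c0 uu_nonzero Cb uu_code_img by blast
  have M: "min_dist (uu_code n C) = 2*d"
    unfolding min_dist_def
  proof (rule Least_equality)
    show "\<exists>c\<in>uu_code n C. c \<noteq> zvec \<and> weight c = 2 * d"
      using c0 uu_nonzero Cb uu_weight uu_code_img by (metis image_eqI subsetD)
    fix w assume "\<exists>c\<in>uu_code n C. c \<noteq> zvec \<and> weight c = w"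
    then obtain u where u: "u \<in> C" "uu n u \<noteq> zvec" "weight (uu n u) = w"
      unfolding uu_code_img by blast
    have "u \<noteq> zvec" using u(2) uu_zvec by auto
    then have "d \<le> weight u" using code_min_le[OF code u(1)] by simp
    then show "2 * d \<le> w" using u Cb uu_weight by fastforce
  qed
  show ?thesis using L D nz M by (simp add: is_code_def)
qed


definition ee :: "nat \<Rightarrow> nat \<Rightarrow> bvec" where
  "ee n i = (\<lambda>l. if l = i \<or> l = n + i then 1 else 0)"

lemma ee_bvecs: "i < n \<Longrightarrow> ee n i \<in> bvecs (2*n)"
  by (auto simp: ee_def bvecs_def)

lemma ee_sum:
  assumes "i < n"
  shows "(\<Sum>l<2*n. f l * ee n i l) = f i + f (n + i)"
proof -
  have "(\<Sum>l<2*n. f l * ee n i l) = (\<Sum>l\<in>{i, n+i}. f l)"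
  proof (rule sum.mono_neutral_cong_right)
    show "finite {..<2*n}" by simp
    show "{i, n + i} \<subseteq> {..<2*n}" using assms by auto
    show "\<forall>l\<in>{..<2 * n} - {i, n + i}. f l * ee n i l = 0" by (auto simp: ee_def)
    show "\<And>l. l \<in> {i, n + i} \<Longrightarrow> f l * ee n i l = f l" by (auto simp: ee_def)
  qed
  also have "\<dots> = f i + f (n + i)" using assms by simp
  finally show ?thesis .
qed

lemma inner_uu:
  assumes "h \<in> bvecs n"
  shows "inner (2*n) (uu n u) h = inner n u h"
proof -
  have "inner (2*n) (uu n u) h = (\<Sum>l<n. uu n u l * h l) + (\<Sum>l<n. uu n u (n + l) * h (n + l))"
    unfolding inner_def mult_2 by (rule sum_split_nat)
  also have "(\<Sum>l<n. uu n u (n + l) * h (n + l)) = 0"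
    using assms by (auto simp: bvecs_def intro!: sum.neutral)
  also have "(\<Sum>l<n. uu n u l * h l) = inner n u h"
    unfolding inner_def by (rule sum.cong) auto
  finally show ?thesis by simp
qed

lemma ee_eval:
  "(\<Sum>i<n. g i * ee n i j) = (if j < n then g j else if j < 2*n then g (j - n) else 0)"
proof -
  have "(\<Sum>i<n. g i * ee n i j) = (\<Sum>i<n. if i = (if j < n then j else j - n) \<and> j < 2*n then g i else 0)"
    by (rule sum.cong) (auto simp: ee_def)
  also have "\<dots> = (if j < n then g j else if j < 2*n then g (j - n) else 0)"
    by auto
  finally show ?thesis .
qed

lemma H2_pc:
  assumes code: "is_code n k d C" and pc: "parity_check n C H1"
  shows "parity_check (2*n) (uu_code n C) (H1 @ map (ee n) [0..<n])"
proof -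
  let ?H2 = "H1 @ map (ee n) [0..<n]"
  have Cb: "C \<subseteq> bvecs n" using code by (rule code_sub)
  have H1d: "set H1 \<subseteq> dual_code n C" using pc set_row_span unfolding parity_check_def by blast
  have H1b: "set H1 \<subseteq> bvecs n" using pc unfolding parity_check_def by blast
  have b2: "bvecs n \<subseteq> bvecs (2*n)" by (auto simp: bvecs_def)
  have setH2: "set ?H2 \<subseteq> bvecs (2*n)" using H1b b2 ee_bvecs by auto
  have rows: "set ?H2 \<subseteq> dual_code (2*n) (uu_code n C)"
  proof
    fix h assume "h \<in> set ?H2"
    then consider "h \<in> set H1" | i where "i < n" "h = ee n i" by auto
    then show "h \<in> dual_code (2*n) (uu_code n C)"
    proof cases
      case 1
      then have "h \<in> bvecs n" "\<forall>u\<in>C. inner n u h = 0" using H1d H1b by (auto simp: dual_code_def)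
      then show ?thesis using b2 by (auto simp: dual_code_def uu_code_img inner_uu)
    next
      case 2
      have "inner (2*n) (uu n u) (ee n i) = 0" for u
        unfolding inner_def using ee_sum[OF 2(1)] 2(1) by simp
      then show ?thesis using 2 ee_bvecs by (auto simp: dual_code_def uu_code_img)
    qed
  qed
  have "dual_code (2*n) (uu_code n C) \<subseteq> row_span ?H2"
  proof
    fix y assume y: "y \<in> dual_code (2*n) (uu_code n C)"
    define w where "w l = (if l < n then y l + y (n + l) else 0)" for l
    have wd: "w \<in> dual_code n C"
    proof -
      have "inner n u w = 0" if "u \<in> C" for u
      proof -
        have "inner n u w = (\<Sum>l<n. u l * y l) + (\<Sum>l<n. u l * y (n + l))"
          unfolding inner_def w_def by (simp add: distrib_left sum.distrib)
        also have "\<dots> = inner (2*n) (uu n u) y"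
          unfolding inner_def mult_2 sum_split_nat by simp
        also have "\<dots> = 0" using y that by (auto simp: dual_code_def uu_code_img)
        finally show ?thesis .
      qed
      then show ?thesis by (auto simp: dual_code_def bvecs_def w_def)
    qed
    then have "w \<in> row_span H1" using pc unfolding parity_check_def by blast
    then obtain c where c: "w = (\<lambda>j. \<Sum>i<length H1. c i * (H1 ! i) j)" unfolding row_span_def by blast
    define c' where "c' i = (if i < length H1 then c i else y (n + (i - length H1)))" for i
    have "(\<lambda>j. \<Sum>i<length ?H2. c' i * (?H2 ! i) j) = y"
    proof
      fix j
      have "(\<Sum>i<length ?H2. c' i * (?H2 ! i) j)
          = (\<Sum>i<length H1. c' i * (?H2 ! i) j) + (\<Sum>i<n. c' (length H1 + i) * (?H2 ! (length H1 + i)) j)"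
        by (simp add: sum_split_nat)
      also have "(\<Sum>i<length H1. c' i * (?H2 ! i) j) = w j"
        unfolding c by (auto intro!: sum.cong simp: c'_def nth_append)
      also have "(\<Sum>i<n. c' (length H1 + i) * (?H2 ! (length H1 + i)) j) = (\<Sum>i<n. y (n + i) * ee n i j)"
        by (rule sum.cong) (auto simp: c'_def nth_append)
      also have "\<dots> = (if j < n then y (n + j) else if j < 2*n then y (n + (j - n)) else 0)"
        by (rule ee_eval)
      finally show "(\<Sum>i<length ?H2. c' i * (?H2 ! i) j) = y j"
        using y by (auto simp: w_def dual_code_def bvecs_def)
    qed
    then show "y \<in> row_span ?H2" unfolding row_span_def by (metis (mono_tags, lifting) mem_Collect_eq)
  qed
  moreover have "row_span ?H2 \<subseteq> dual_code (2*n) (uu_code n C)"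
    by (rule row_span_sub[OF dual_lin rows])
  ultimately show ?thesis unfolding parity_check_def using setH2 by blast
qed

lemma H2_wop:
  assumes w1: "wop n H1 d" and H1b: "set H1 \<subseteq> bvecs n"
  shows "wop (2*n) (H1 @ map (ee n) [0..<n]) (2*d)"
  unfolding wop_def
proof (intro allI impI)
  let ?H2 = "H1 @ map (ee n) [0..<n]"
  fix S assume S: "S \<subseteq> {..<2*n} \<and> S \<noteq> {} \<and> card S < 2*d"
  show "has_weight_one_row ?H2 S"
  proof (cases "\<exists>i<n. (i \<in> S) \<noteq> (n + i \<in> S)")
    case True
    then obtain i where i: "i < n" "(i \<in> S) \<noteq> (n + i \<in> S)" by blast
    have "{j \<in> S. ee n i j \<noteq> 0} = S \<inter> {i, n + i}" by (auto simp: ee_def)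
    also have "\<dots> = (if i \<in> S then {i} else {n + i})"
      using i by (cases "i \<in> S") auto
    finally have "card {j \<in> S. ee n i j \<noteq> 0} = 1" by simp
    moreover have "ee n i \<in> set ?H2" using i by auto
    ultimately show ?thesis unfolding has_weight_one_row_def by blast
  next
    case False
    define S1 where "S1 = {i \<in> S. i < n}"
    have S1n: "S1 \<subseteq> {..<n}" by (auto simp: S1_def)
    have SS: "S = S1 \<union> (\<lambda>i. n + i) ` S1"
    proof (rule set_eqI)
      fix j show "j \<in> S \<longleftrightarrow> j \<in> S1 \<union> (\<lambda>i. n + i) ` S1"
      proof
        assume j: "j \<in> S"
        show "j \<in> S1 \<union> (\<lambda>i. n + i) ` S1"
        proof (cases "j < n")
          case True then show ?thesis using j by (simp add: S1_def)
        next
          case f: False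
          have "j < 2*n" using S j by blast
          then have "j - n < n" "n + (j - n) = j" using f by simp_all
          then have "j - n \<in> S1" using False j by (auto simp: S1_def)
          then show ?thesis using \<open>n + (j - n) = j\<close> by (metis UnI2 image_eqI)
        qed
      next
        assume "j \<in> S1 \<union> (\<lambda>i. n + i) ` S1"
        then show "j \<in> S" using False by (auto simp: S1_def)
      qed
    qed
    have cS: "card S = 2 * card S1" using card_double[OF S1n] SS by simp
    have "S1 \<noteq> {}"
    proof
      assume "S1 = {}"
      then have "S = {}" using SS by simp
      then show False using S by simp
    qed
    moreover have "card S1 < d" using cS S by simp
    ultimately obtain h where h: "h \<in> set H1" "card {j \<in> S1. h j \<noteq> 0} = 1"
      using w1 S1n unfolding wop_def has_weight_one_row_def by blast
    have hb: "h \<in> bvecs n" using h H1b by blast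
    have "{j \<in> S. h j \<noteq> 0} = {j \<in> S1. h j \<noteq> 0}"
      using bvecs_lt[OF hb] by (auto simp: S1_def)
    then show ?thesis unfolding has_weight_one_row_def using h by (intro bexI[of _ h]) auto
  qed
qed

theorem theorem8:
  fixes n k d :: nat and C1 :: "bvec set"
  assumes "is_code n k d C1"
  shows "is_code (2*n) k (2*d) (uu_code n C1) \<and>
         stop_red (2*n) (uu_code n C1) \<le> stop_red n C1 + n"
proof -
  note code = assms
  have code2: "is_code (2*n) k (2*d) (uu_code n C1)" by (rule uu_is_code[OF code])
  have Cb: "C1 \<subseteq> bvecs n" using code by (rule code_sub)
  have md: "min_dist C1 = d" using code by (simp add: is_code_def)
  let ?P = "\<lambda>m. \<exists>H. length H = m \<and> parity_check n C1 H \<and> stop_dist n H = min_dist C1"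
  obtain H0 where "parity_check n C1 H0" "stop_dist n H0 = d" using exists_H[OF code] by blast
  then have "?P (length H0)" using md by (intro exI[of _ H0]) simp
  then have "?P (Least ?P)" by (rule LeastI)
  then obtain H1 where H1': "length H1 = Least ?P" "parity_check n C1 H1" "stop_dist n H1 = min_dist C1"
    by blast
  have H1: "length H1 = stop_red n C1" "parity_check n C1 H1" "stop_dist n H1 = d"
    using H1' md unfolding stop_red_def by simp_all
  obtain c0 where c0: "c0 \<in> C1" "c0 \<noteq> zvec" "weight c0 = d" using code_min_ex[OF code] by blast
  have w1: "wop n H1 d" using sd_wop[OF H1(2) Cb c0(1,2)] H1(3) by simp
  have H1b: "set H1 \<subseteq> bvecs n" using H1(2) unfolding parity_check_def by blast
  let ?H2 = "H1 @ map (ee n) [0..<n]"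
  have pc2: "parity_check (2*n) (uu_code n C1) ?H2" by (rule H2_pc[OF code H1(2)])
  have w2: "wop (2*n) ?H2 (2*d)" by (rule H2_wop[OF w1 H1b])
  have C2b: "uu_code n C1 \<subseteq> bvecs (2*n)" using code2 by (rule code_sub)
  have "uu n c0 \<in> uu_code n C1" using c0 by (simp add: uu_code_img)
  moreover have "uu n c0 \<noteq> zvec" using uu_nonzero[of c0 n] c0 Cb by blast
  moreover have "weight (uu n c0) = 2*d" using uu_weight[of c0 n] c0 Cb by auto
  ultimately have sd2: "stop_dist (2*n) ?H2 = 2*d" using sd_eq[OF pc2 C2b _ _ _ w2] by blast
  have md2: "min_dist (uu_code n C1) = 2*d" using code2 by (simp add: is_code_def)
  have "stop_red (2*n) (uu_code n C1) \<le> length ?H2"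
    unfolding stop_red_def
  proof (rule Least_le)
    show "\<exists>H. length H = length ?H2 \<and> parity_check (2*n) (uu_code n C1) H \<and> stop_dist (2*n) H = min_dist (uu_code n C1)"
      using pc2 sd2 md2 by (intro exI[of _ ?H2]) simp
  qed
  then show ?thesis using code2 H1(1) by simp
qed

end
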